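(* Let $G$ be a $k$-connected chordal graph and let $T$ be a tree decomposition of $G$ in which the label $l(x)$ of every node $x\in V(T)$ induces a maximal clique of $G$. Let $M'=\{\,l(x)\cap l(y) : \{x,y\}\in E(T)\,\}$ and let $M''=\{\,Y\in M' : \text{there is no } Z\in M' \text{ with } Z\subsetneq Y\,\}$. Then $M''$ is exactly the set of minimal vertex separators of $G$.
   Context: A graph is chordal if it is simple and has no chordless cycle (a cycle of length at least 4 with no chord). A tree decomposition of $G$ is a tree $T$ with a label $l(x)\subseteq V(G)$ for each node $x$, such that every vertex of $G$ lies in some label, every edge of $G$ has both endpoints in some label, and for each $v\in V(G)$ the set of nodes whose labels contain $v$ induces a connected subtree of $T$. A vertex separator of $G$ is a set $S\subseteq V(G)$ such that $G-S$ is disconnected; it is a minimal vertex separator if no proper subset of $S$ is a vertex separator. *)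

theory Defs
  imports Main
begin

definition simple_graph :: "'a set \<Rightarrow> 'a set set \<Rightarrow> bool" where
  "simple_graph V E \<longleftrightarrow> finite V \<and>
     (\<forall>e\<in>E. \<exists>u v. u \<noteq> v \<and> e = {u, v} \<and> u \<in> V \<and> v \<in> V)"

text \<open>Connectivity of the subgraph induced by S (the empty set counts as connected).\<close>
definition connected_on :: "'a set set \<Rightarrow> 'a set \<Rightarrow> bool" where
  "connected_on E S \<longleftrightarrow>
     (\<forall>u\<in>S. \<forall>v\<in>S. (u, v) \<in> {(x, y). {x, y} \<in> E \<and> x \<in> S \<and> y \<in> S}\<^sup>*)"

definition is_cycle :: "'a set set \<Rightarrow> 'a list \<Rightarrow> bool" where
  "is_cycle E vs \<longleftrightarrow> distinct vs \<and> length vs \<ge> 3 \<and>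
     (\<forall>i < length vs. {vs ! i, vs ! ((i + 1) mod length vs)} \<in> E)"

definition chordless :: "'a set set \<Rightarrow> 'a list \<Rightarrow> bool" where
  "chordless E vs \<longleftrightarrow>
     (\<forall>i < length vs. \<forall>j < length vs. {vs ! i, vs ! j} \<in> E \<longrightarrow>
        j = (i + 1) mod length vs \<or> i = (j + 1) mod length vs)"

definition chordal :: "'a set \<Rightarrow> 'a set set \<Rightarrow> bool" where
  "chordal V E \<longleftrightarrow> simple_graph V E \<and>
     \<not> (\<exists>vs. set vs \<subseteq> V \<and> is_cycle E vs \<and> length vs \<ge> 4 \<and> chordless E vs)"

definition clique :: "'a set \<Rightarrow> 'a set set \<Rightarrow> 'a set \<Rightarrow> bool" where
  "clique V E C \<longleftrightarrow> C \<subseteq> V \<and> (\<forall>u\<in>C. \<forall>v\<in>C. u \<noteq> v \<longrightarrow> {u, v} \<in> E)"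

definition maximal_clique :: "'a set \<Rightarrow> 'a set set \<Rightarrow> 'a set \<Rightarrow> bool" where
  "maximal_clique V E C \<longleftrightarrow> clique V E C \<and> \<not> (\<exists>D. clique V E D \<and> C \<subset> D)"

definition is_tree :: "'b set \<Rightarrow> 'b set set \<Rightarrow> bool" where
  "is_tree N ET \<longleftrightarrow> simple_graph N ET \<and> N \<noteq> {} \<and> connected_on ET N \<and>
     \<not> (\<exists>xs. set xs \<subseteq> N \<and> is_cycle ET xs)"

definition tree_decomposition ::
  "'a set \<Rightarrow> 'a set set \<Rightarrow> 'b set \<Rightarrow> 'b set set \<Rightarrow> ('b \<Rightarrow> 'a set) \<Rightarrow> bool" where
  "tree_decomposition V E N ET l \<longleftrightarrow> is_tree N ET \<and>
     (\<forall>x\<in>N. l x \<subseteq> V) \<and>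
     (\<forall>v\<in>V. \<exists>x\<in>N. v \<in> l x) \<and>
     (\<forall>e\<in>E. \<exists>x\<in>N. e \<subseteq> l x) \<and>
     (\<forall>v\<in>V. connected_on ET {x \<in> N. v \<in> l x})"

definition k_connected :: "'a set \<Rightarrow> 'a set set \<Rightarrow> nat \<Rightarrow> bool" where
  "k_connected V E k \<longleftrightarrow> simple_graph V E \<and> card V > k \<and>
     (\<forall>S \<subseteq> V. card S < k \<longrightarrow> connected_on E (V - S))"

definition vertex_separator :: "'a set \<Rightarrow> 'a set set \<Rightarrow> 'a set \<Rightarrow> bool" where
  "vertex_separator V E S \<longleftrightarrow> S \<subseteq> V \<and> \<not> connected_on E (V - S)"

definition minimal_vertex_separator :: "'a set \<Rightarrow> 'a set set \<Rightarrow> 'a set \<Rightarrow> bool" where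
  "minimal_vertex_separator V E S \<longleftrightarrow> vertex_separator V E S \<and>
     (\<forall>S'. S' \<subset> S \<longrightarrow> \<not> vertex_separator V E S')"

end

theory Submission
  imports Defs "HOL-Library.Transitive_Closure_Table"
begin

lemma tree_no_path:
  assumes tr: "is_tree N ET" and e: "{x, y} \<in> ET" and xy: "x \<noteq> y" and xN: "x \<in> N"
  shows "(x, y) \<notin> {(p, q). {p, q} \<in> ET - {{x, y}} \<and> p \<in> N \<and> q \<in> N}\<^sup>*"
proof
  define R where "R = {(p, q). {p, q} \<in> ET - {{x, y}} \<and> p \<in> N \<and> q \<in> N}"
  let ?R = "\<lambda>p q. (p, q) \<in> R"
  assume "(x, y) \<in> {(p, q). {p, q} \<in> ET - {{x, y}} \<and> p \<in> N \<and> q \<in> N}\<^sup>*"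
  then have "(x, y) \<in> R\<^sup>*" unfolding R_def .
  then have "?R\<^sup>*\<^sup>* x y"
    by (simp add: rtranclp_rtrancl_eq)
  from rtranclp_eq_rtrancl_path[THEN iffD1, OF this]
  obtain xs where "rtrancl_path ?R x xs y" by blast
  then obtain ys where p: "rtrancl_path ?R x ys y" and d: "distinct (x # ys)"
    by (rule rtrancl_path_distinct)
  have ne: "ys \<noteq> []"
  proof
    assume "ys = []"
    with p have "x = y" by (cases rule: rtrancl_path.cases) auto
    with xy show False by simp
  qed
  have last: "last ys = y" using rtrancl_path_last[OF p ne] .
  have l2: "length ys \<ge> 2"
  proof (rule ccontr)
    assume "\<not> length ys \<ge> 2"
    with ne obtain c where "ys = [c]" by (cases ys; cases "tl ys") auto
    with last have "ys = [y]" by simp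
    with p have "?R x y" by (cases rule: rtrancl_path.cases) auto
    then show False by (simp add: R_def)
  qed
  let ?vs = "x # ys"
  have setN: "set ?vs \<subseteq> N"
  proof
    fix z assume "z \<in> set ?vs"
    then have "z = x \<or> z \<in> set ys" by simp
    then show "z \<in> N"
    proof
      assume "z \<in> set ys"
      from rtrancl_path_Range[OF p this] show "z \<in> N" by (auto simp: R_def)
    qed (use xN in auto)
  qed
  have cyc: "is_cycle ET ?vs"
    unfolding is_cycle_def
  proof (intro conjI allI impI)
    show "distinct ?vs" by fact
    show "3 \<le> length ?vs" using l2 by simp
    fix i assume i: "i < length ?vs"
    show "{?vs ! i, ?vs ! ((i + 1) mod length ?vs)} \<in> ET"
    proof (cases "i < length ys")
      case True
      have "(i + 1) mod length ?vs = i + 1" using True by simp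
      moreover have "?R (?vs ! i) (ys ! i)" using rtrancl_path_nth[OF p True] .
      ultimately show ?thesis by (simp add: R_def)
    next
      case False
      with i have ii: "i = length ys" by simp
      have "?vs ! i = y" using ii last ne by (simp add: last_conv_nth)
      moreover have "(i + 1) mod length ?vs = 0" using ii by simp
      ultimately show ?thesis using e by (simp add: insert_commute)
    qed
  qed
  from tr setN cyc show False unfolding is_tree_def by blast
qed

lemma cross_step:
  assumes "(z, w) \<in> Q\<^sup>*" and "z \<in> T" and "w \<notin> T"
  shows "\<exists>p q. (p, q) \<in> Q \<and> p \<in> T \<and> q \<notin> T"
  using assms
proof (induction rule: rtrancl_induct)
  case base then show ?case by simp
next
  case (step u w)
  then show ?case by (cases "u \<in> T") auto
qed
lemma sep:
  assumes td: "tree_decomposition V E N ET l"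
    and mc: "\<forall>x\<in>N. maximal_clique V E (l x)"
    and inj: "inj_on l N"
    and xN: "x \<in> N" and yN: "y \<in> N" and e: "{x, y} \<in> ET"
  shows "vertex_separator V E (l x \<inter> l y)"
proof -
  let ?S = "l x \<inter> l y"
  have tr: "is_tree N ET" using td unfolding tree_decomposition_def by blast
  have sg: "simple_graph N ET" using tr unfolding is_tree_def by blast
  have xy: "x \<noteq> y"
  proof
    assume "x = y"
    moreover obtain u v where "u \<noteq> v" "{x, y} = {u, v}" using e sg unfolding simple_graph_def by blast
    ultimately show False by (auto simp: doubleton_eq_iff)
  qed
  have lV: "\<And>z. z \<in> N \<Longrightarrow> l z \<subseteq> V" using td unfolding tree_decomposition_def by blast
  have conn: "\<And>v. v \<in> V \<Longrightarrow> connected_on ET {z \<in> N. v \<in> l z}"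
    using td unfolding tree_decomposition_def by blast
  have bag: "\<And>ed. ed \<in> E \<Longrightarrow> \<exists>z\<in>N. ed \<subseteq> l z"
    using td unfolding tree_decomposition_def by blast
  have notsub: "\<And>p q. p \<in> N \<Longrightarrow> q \<in> N \<Longrightarrow> p \<noteq> q \<Longrightarrow> \<not> l p \<subseteq> l q"
  proof
    fix p q assume p: "p \<in> N" and q: "q \<in> N" and pq: "p \<noteq> q" and s: "l p \<subseteq> l q"
    have "l p \<noteq> l q" using inj p q pq by (meson inj_on_def)
    with s have "l p \<subset> l q" by blast
    moreover have "clique V E (l q)" using mc q unfolding maximal_clique_def by blast
    ultimately show False using mc p unfolding maximal_clique_def by blast
  qed
  obtain a where a: "a \<in> l x" "a \<notin> l y" using notsub[OF xN yN xy] by blast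
  obtain b where b: "b \<in> l y" "b \<notin> l x" using notsub[OF yN xN] xy by blast
  define Tx where "Tx = {z. (x, z) \<in> {(p, q). {p, q} \<in> ET - {{x, y}} \<and> p \<in> N \<and> q \<in> N}\<^sup>*}"
  have xT: "x \<in> Tx" unfolding Tx_def by simp
  have yT: "y \<notin> Tx" unfolding Tx_def using tree_no_path[OF tr e xy xN] by simp
  have TN: "Tx \<subseteq> N"
  proof
    fix z assume "z \<in> Tx"
    then have "(x, z) \<in> {(p, q). {p, q} \<in> ET - {{x, y}} \<and> p \<in> N \<and> q \<in> N}\<^sup>*"
      unfolding Tx_def by simp
    then show "z \<in> N" using xN by (induction rule: rtrancl_induct) auto
  qed
  have edge: "\<And>p q. p \<in> Tx \<Longrightarrow> q \<in> N \<Longrightarrow> q \<notin> Tx \<Longrightarrow> {p, q} \<in> ET \<Longrightarrow> {p, q} = {x, y}"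
  proof (rule ccontr)
    fix p q assume p: "p \<in> Tx" and q: "q \<in> N" "q \<notin> Tx" and pq: "{p, q} \<in> ET" and ne: "{p, q} \<noteq> {x, y}"
    have "p \<in> N" using p TN by blast
    with q pq ne have "(p, q) \<in> {(p, q). {p, q} \<in> ET - {{x, y}} \<and> p \<in> N \<and> q \<in> N}" by simp
    with p have "q \<in> Tx" unfolding Tx_def by (simp add: rtrancl.rtrancl_into_rtrancl)
    with q show False by simp
  qed
  have cross: "\<And>v z w. v \<in> V \<Longrightarrow> z \<in> N \<Longrightarrow> z \<in> Tx \<Longrightarrow> v \<in> l z \<Longrightarrow> w \<in> N \<Longrightarrow> w \<notin> Tx \<Longrightarrow> v \<in> l w
      \<Longrightarrow> v \<in> ?S"
  proof -
    fix v z w assume v: "v \<in> V" and z: "z \<in> N" "z \<in> Tx" "v \<in> l z" and w: "w \<in> N" "w \<notin> Tx" "v \<in> l w"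
    have "(z, w) \<in> {(p, q). {p, q} \<in> ET \<and> p \<in> {z \<in> N. v \<in> l z} \<and> q \<in> {z \<in> N. v \<in> l z}}\<^sup>*"
      using conn[OF v] z w unfolding connected_on_def by blast
    from cross_step[OF this z(2) w(2)] obtain p q where
      pq: "{p, q} \<in> ET" "p \<in> N" "v \<in> l p" "q \<in> N" "v \<in> l q" "p \<in> Tx" "q \<notin> Tx" by blast
    have "{p, q} = {x, y}" using edge pq by blast
    with pq show "v \<in> ?S" by (auto simp: doubleton_eq_iff)
  qed
  define Sx where "Sx = {u \<in> V - ?S. \<forall>z\<in>N. u \<in> l z \<longrightarrow> z \<in> Tx}"
  have aV: "a \<in> V" using lV[OF xN] a by blast
  have bV: "b \<in> V" using lV[OF yN] b by blast
  have aS: "a \<in> Sx" unfolding Sx_def using a aV cross[OF aV xN xT a(1)] by blast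
  have bS: "b \<notin> Sx" unfolding Sx_def using yN b yT by blast
  have propg: "\<And>u. (a, u) \<in> {(p, q). {p, q} \<in> E \<and> p \<in> V - ?S \<and> q \<in> V - ?S}\<^sup>* \<Longrightarrow> u \<in> Sx"
  proof -
    fix u assume "(a, u) \<in> {(p, q). {p, q} \<in> E \<and> p \<in> V - ?S \<and> q \<in> V - ?S}\<^sup>*"
    then show "u \<in> Sx"
    proof (induction rule: rtrancl_induct)
      case base then show ?case using aS .
    next
      case (step u w)
      then have uw: "{u, w} \<in> E" "w \<in> V - ?S" and uS: "u \<in> Sx" by auto
      obtain z0 where z0: "z0 \<in> N" "{u, w} \<subseteq> l z0" using bag[OF uw(1)] by blast
      have z0T: "z0 \<in> Tx" using uS z0 unfolding Sx_def by blast
      show ?case unfolding Sx_def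
      proof (intro CollectI conjI ballI impI)
        show "w \<in> V - ?S" by fact
        fix z1 assume "z1 \<in> N" "w \<in> l z1"
        then show "z1 \<in> Tx" using cross[of w z0 z1] uw z0 z0T by blast
      qed
    qed
  qed
  have "\<not> connected_on E (V - ?S)"
  proof
    assume "connected_on E (V - ?S)"
    then have "(a, b) \<in> {(p, q). {p, q} \<in> E \<and> p \<in> V - ?S \<and> q \<in> V - ?S}\<^sup>*"
      unfolding connected_on_def using a b aV bV by blast
    then show False using propg bS by blast
  qed
  moreover have "?S \<subseteq> V" using lV[OF xN] by blast
  ultimately show ?thesis unfolding vertex_separator_def by blast
qed

lemma clique_edge: "clique V E C \<Longrightarrow> u \<in> C \<Longrightarrow> v \<in> C \<Longrightarrow> u \<noteq> v \<Longrightarrow> {u, v} \<in> E"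
  unfolding clique_def by blast

lemma sub:
  assumes td: "tree_decomposition V E N ET l"
    and mc: "\<forall>x\<in>N. maximal_clique V E (l x)"
    and vs: "vertex_separator V E S"
  shows "\<exists>x y. x \<in> N \<and> y \<in> N \<and> {x, y} \<in> ET \<and> l x \<inter> l y \<subseteq> S"
proof (rule ccontr)
  assume H: "\<not> ?thesis"
  have tr: "is_tree N ET" using td unfolding tree_decomposition_def by blast
  have lV: "\<And>z. z \<in> N \<Longrightarrow> l z \<subseteq> V" using td unfolding tree_decomposition_def by blast
  have cl: "\<And>z. z \<in> N \<Longrightarrow> clique V E (l z)" using mc unfolding maximal_clique_def by blast
  have cov: "\<And>v. v \<in> V \<Longrightarrow> \<exists>z\<in>N. v \<in> l z" using td unfolding tree_decomposition_def by blast
  let ?G = "{(p, q). {p, q} \<in> E \<and> p \<in> V - S \<and> q \<in> V - S}"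
  have nc: "\<not> connected_on E (V - S)" using vs unfolding vertex_separator_def by blast
  have "\<exists>a\<in>V - S. \<exists>b\<in>V - S. (a, b) \<notin> ?G\<^sup>*"
    using nc unfolding connected_on_def by simp
  then obtain a where a1: "a \<in> V - S" and ex: "\<exists>b\<in>V - S. (a, b) \<notin> ?G\<^sup>*" ..
  from ex obtain b where b1: "b \<in> V - S" and b2: "(a, b) \<notin> ?G\<^sup>*" ..
  note ab = a1 b1 b2
  obtain x0 where x0: "x0 \<in> N" "a \<in> l x0" using cov a1 by blast
  have reach: "\<And>z. (x0, z) \<in> {(p, q). {p, q} \<in> ET \<and> p \<in> N \<and> q \<in> N}\<^sup>* \<Longrightarrow>
      z \<in> N \<and> (\<forall>w \<in> l z - S. (a, w) \<in> ?G\<^sup>*)"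
  proof -
    fix z assume "(x0, z) \<in> {(p, q). {p, q} \<in> ET \<and> p \<in> N \<and> q \<in> N}\<^sup>*"
    then show "z \<in> N \<and> (\<forall>w \<in> l z - S. (a, w) \<in> ?G\<^sup>*)"
    proof (induction rule: rtrancl_induct)
      case base
      show ?case
      proof (intro conjI ballI)
        show "x0 \<in> N" by fact
        fix w assume w: "w \<in> l x0 - S"
        show "(a, w) \<in> ?G\<^sup>*"
        proof (cases "w = a")
          case False
          then have "{a, w} \<in> E" using clique_edge[OF cl[OF x0(1)]] x0(2) w by blast
          moreover have "w \<in> V" using lV[OF x0(1)] w by blast
          ultimately show ?thesis using a1 w by (intro r_into_rtrancl) auto
        qed simp
      qed
    next
      case (step p q)
      from step.hyps(2) have pq: "{p, q} \<in> ET" "p \<in> N" "q \<in> N" by simp_all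
      from step.IH have IH: "\<forall>w \<in> l p - S. (a, w) \<in> ?G\<^sup>*" by (rule conjunct2)
      obtain v where v: "v \<in> l p" "v \<in> l q" "v \<notin> S" using H pq by blast
      have av: "(a, v) \<in> ?G\<^sup>*" using IH v by blast
      show ?case
      proof (intro conjI ballI)
        show "q \<in> N" by fact
        fix w assume w: "w \<in> l q - S"
        show "(a, w) \<in> ?G\<^sup>*"
        proof (cases "w = v")
          case False
          then have "{v, w} \<in> E" using clique_edge[OF cl[OF pq(3)]] v(2) w by blast
          moreover have "w \<in> V" "v \<in> V" using lV[OF pq(3)] w v by blast+
          ultimately have "(v, w) \<in> ?G" using v(3) w by simp
          with av show ?thesis by (rule rtrancl_into_rtrancl)
        next
          case True
          then show ?thesis using av by simp
        qed
      qed
    qed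
  qed
  obtain z where z: "z \<in> N" "b \<in> l z" using cov b1 by blast
  have "(x0, z) \<in> {(p, q). {p, q} \<in> ET \<and> p \<in> N \<and> q \<in> N}\<^sup>*"
  proof -
    have "connected_on ET N" using tr unfolding is_tree_def by blast
    then have "\<forall>v\<in>N. (x0, v) \<in> {(p, q). {p, q} \<in> ET \<and> p \<in> N \<and> q \<in> N}\<^sup>*"
      unfolding connected_on_def using x0(1) by (rule bspec)
    then show ?thesis using z(1) by (rule bspec)
  qed
  from reach[OF this] z b1 b2 show False by blast
qed

theorem theorem1:
  fixes V :: "'a set" and E :: "'a set set" and k :: nat
    and N :: "'b set" and ET :: "'b set set" and l :: "'b \<Rightarrow> 'a set"
  assumes "chordal V E"
    and "k_connected V E k"
    and "tree_decomposition V E N ET l"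
    and "\<forall>x\<in>N. maximal_clique V E (l x)"
    and "inj_on l N"
  shows "{Y \<in> {l x \<inter> l y | x y. x \<in> N \<and> y \<in> N \<and> {x, y} \<in> ET}.
            \<not> (\<exists>Z \<in> {l x \<inter> l y | x y. x \<in> N \<and> y \<in> N \<and> {x, y} \<in> ET}. Z \<subset> Y)}
         = {S. minimal_vertex_separator V E S}"
proof -
  define M where "M = {l x \<inter> l y | x y. x \<in> N \<and> y \<in> N \<and> {x, y} \<in> ET}"
  have A: "\<And>Y. Y \<in> M \<Longrightarrow> vertex_separator V E Y"
  proof -
    fix Y assume "Y \<in> M"
    then obtain x y where "Y = l x \<inter> l y" "x \<in> N" "y \<in> N" "{x, y} \<in> ET"
      unfolding M_def by blast
    then show "vertex_separator V E Y" using sep[OF assms(3) assms(4) assms(5)] by simp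
  qed
  have B: "\<And>S. vertex_separator V E S \<Longrightarrow> \<exists>Z \<in> M. Z \<subseteq> S"
  proof -
    fix S assume "vertex_separator V E S"
    from sub[OF assms(3) assms(4) this] obtain x y where
      "x \<in> N" "y \<in> N" "{x, y} \<in> ET" "l x \<inter> l y \<subseteq> S" by blast
    then show "\<exists>Z \<in> M. Z \<subseteq> S" unfolding M_def by blast
  qed
  have "{Y \<in> M. \<not> (\<exists>Z \<in> M. Z \<subset> Y)} = {S. minimal_vertex_separator V E S}"
  proof (intro equalityI subsetI)
    fix Y assume "Y \<in> {Y \<in> M. \<not> (\<exists>Z \<in> M. Z \<subset> Y)}"
    then have Y1: "Y \<in> M" and Y2: "\<not> (\<exists>Z \<in> M. Z \<subset> Y)" by auto
    have "minimal_vertex_separator V E Y"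
      unfolding minimal_vertex_separator_def
    proof (intro conjI allI impI)
      show "vertex_separator V E Y" using A Y1 .
      fix S' assume sub': "S' \<subset> Y"
      show "\<not> vertex_separator V E S'"
      proof
        assume "vertex_separator V E S'"
        then obtain Z where Z: "Z \<in> M" "Z \<subseteq> S'" using B by blast
        have "Z \<subset> Y" using Z(2) sub' by (rule subset_psubset_trans)
        with Z(1) Y2 show False by blast
      qed
    qed
    then show "Y \<in> {S. minimal_vertex_separator V E S}" by simp
  next
    fix S assume "S \<in> {S. minimal_vertex_separator V E S}"
    then have S1: "vertex_separator V E S" and S2: "\<And>S'. S' \<subset> S \<Longrightarrow> \<not> vertex_separator V E S'"
      unfolding minimal_vertex_separator_def by auto
    obtain Z where Z: "Z \<in> M" "Z \<subseteq> S" using B S1 by blast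
    have "\<not> Z \<subset> S" using S2 A[OF Z(1)] by blast
    with Z(2) have "Z = S" by blast
    with Z have SM: "S \<in> M" by simp
    have "\<not> (\<exists>Z \<in> M. Z \<subset> S)"
    proof
      assume "\<exists>Z \<in> M. Z \<subset> S"
      then obtain Z' where "Z' \<in> M" "Z' \<subset> S" by blast
      then show False using S2 A by blast
    qed
    with SM show "S \<in> {Y \<in> M. \<not> (\<exists>Z \<in> M. Z \<subset> Y)}" by simp
  qed
  then show ?thesis unfolding M_def .
qed

end
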